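(* For $a,b\in G$, the ideal $\{a^{-1}b^{-1}ab\}^\#$ of $\kappa G^\#$ equals the ideal generated by $\{[\vec a,\vec b]\cdot\vec c : \vec c\in\Lambda_G\}$.
   Context: Let $\kappa$ be a field of characteristic $0$ and $G$ a group. Let $*:\kappa G\to\kappa G$ be the $\kappa$-linear map with $g^*=g^{-1}$, $(\kappa G)^*$ its fixed points, and $A_G$ the quotient of $\kappa G$ by the two-sided ideal generated by all $ab-ba$, $a\in\kappa G$, $b\in(\kappa G)^*$; $*$ descends to $A_G$. $\kappa G^\#=\{x\in A_G:x^*=x\}$, $\Lambda_G=\{x\in A_G:x^*=-x\}$; group elements are identified with their images in $A_G$; $\bar x=\tfrac12(x+x^* )$, $\vec x=\tfrac12(x-x^* )$. For $\vec x,\vec y\in\Lambda_G$: $\vec x\cdot\vec y=-\tfrac12(\vec x\vec y+\vec y\vec x)$, $[\vec x,\vec y]=\tfrac12(\vec x\vec y-\vec y\vec x)$. For $L\subset G$, $L^\#$ is the ideal of $\kappa G^\#$ generated by $\{\overline{xl}-\bar x:x\in A_G,l\in L\}$. *)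

theory Defs
  imports "HOL-Library.Poly_Mapping"
begin

text \<open>
  The group G is a type of class group_add (written additively, NOT assumed
  commutative; the group law g h is written g + h, the inverse g^-1 is -g,
  the neutral element is 0).  The group algebra kG is the monoid algebra
  (poly_mapping 'g 'k) of finitely supported functions with convolution product;
  the group element g is identified with Poly_Mapping.single g 1.
\<close>

type_synonym ('g, 'k) grpalg = "'g \<Rightarrow>\<^sub>0 'k"

definition grp :: "'g::group_add \<Rightarrow> ('g, 'k::field_char_0) grpalg" where
  "grp g = Poly_Mapping.single g 1"

definition star :: "('g::group_add, 'k::field_char_0) grpalg \<Rightarrow> ('g, 'k) grpalg" where
  "star x = Poly_Mapping.map_key uminus x"

definition half :: "('g::group_add, 'k::field_char_0) grpalg \<Rightarrow> ('g, 'k) grpalg" where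
  "half x = Poly_Mapping.map (\<lambda>c. c / 2) x"

inductive_set ideal2 :: "'a::ring set \<Rightarrow> 'a set" for S where
  zero: "0 \<in> ideal2 S"
| gen: "s \<in> S \<Longrightarrow> s \<in> ideal2 S"
| add: "x \<in> ideal2 S \<Longrightarrow> y \<in> ideal2 S \<Longrightarrow> x + y \<in> ideal2 S"
| mult: "x \<in> ideal2 S \<Longrightarrow> r * x * t \<in> ideal2 S"

text \<open>The ideal of kG defining A_G: generated by all ab - ba with b* = b.\<close>
definition IG :: "('g::group_add, 'k::field_char_0) grpalg set" where
  "IG = ideal2 {a * b - b * a | a b. star b = b}"

text \<open>A_G is kG / IG; the quotient map sends x to its coset.\<close>
definition piG :: "('g::group_add, 'k::field_char_0) grpalg \<Rightarrow> ('g, 'k) grpalg set" where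
  "piG x = {y. y - x \<in> IG}"

text \<open>Representatives (in kG) of the elements of kG^# (star-fixed elements
  of A_G) and of Lambda_G (star-antifixed elements of A_G).  Since star
  descends to A_G, piG x is star-fixed iff star x - x \<in> IG.\<close>
definition SymRep :: "('g::group_add, 'k::field_char_0) grpalg set" where
  "SymRep = {x. star x - x \<in> IG}"

definition AntiRep :: "('g::group_add, 'k::field_char_0) grpalg set" where
  "AntiRep = {x. star x + x \<in> IG}"

definition bar :: "('g::group_add, 'k::field_char_0) grpalg \<Rightarrow> ('g, 'k) grpalg" where
  "bar x = half (x + star x)"

definition vecp :: "('g::group_add, 'k::field_char_0) grpalg \<Rightarrow> ('g, 'k) grpalg" where
  "vecp x = half (x - star x)"

definition dotp :: "('g::group_add, 'k::field_char_0) grpalg \<Rightarrow> ('g, 'k) grpalg \<Rightarrow> ('g, 'k) grpalg" where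
  "dotp x y = - half (x * y + y * x)"

definition brk :: "('g::group_add, 'k::field_char_0) grpalg \<Rightarrow> ('g, 'k) grpalg \<Rightarrow> ('g, 'k) grpalg" where
  "brk x y = half (x * y - y * x)"

text \<open>The ideal of the (commutative) ring kG^# generated by the image of a set
  S of representatives: all finite sums  \<Sum> r_i s_i  with r_i \<in> kG^#, s_i \<in> S,
  taken as a set of elements of A_G (cosets).\<close>
definition sharp_ideal :: "('g::group_add, 'k::field_char_0) grpalg set \<Rightarrow> ('g, 'k) grpalg set set" where
  "sharp_ideal S = piG ` {sum_list (map (\<lambda>(r, s). r * s) rs) | rs.
       \<forall>(r, s) \<in> set rs. r \<in> SymRep \<and> s \<in> S}"

definition Lsharp :: "'g::group_add set \<Rightarrow> ('g, 'k::field_char_0) grpalg set set" where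
  "Lsharp L = sharp_ideal {bar (x * grp l) - bar x | x l. l \<in> L}"

end

theory Submission
  imports Defs
begin

lemma pm_induct:
  fixes x :: "'a \<Rightarrow>\<^sub>0 'b::{zero, monoid_add}"
  assumes "P 0" "\<And>p k c. P p \<Longrightarrow> P (p + Poly_Mapping.single k c)"
  shows "P x"
proof (induction x rule: Poly_Mapping.update_induct)
  case const then show ?case using assms(1) by simp
next
  case (update f a b)
  have "Poly_Mapping.update a b f = f + Poly_Mapping.single a b"
    using update(1)
    by (intro poly_mapping_eqI) (auto simp: lookup_add lookup_update lookup_single when_def in_keys_iff)
  then show ?case using assms(2)[OF update(3)] by simp
qed

type_synonym ('g, 'k) GA = "('g::group_add, 'k::field_char_0) grpalg"

lemma inj_uminus_g: "inj (uminus :: 'g::group_add \<Rightarrow> 'g)"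
  by (simp add: inj_on_def)

lemma star_add: "star (x + y :: ('g::group_add,'k::field_char_0) grpalg) = star x + star y"
  unfolding star_def by (rule map_key_plus[OF inj_uminus_g])

lemma star_zero[simp]: "star (0 :: ('g::group_add,'k::field_char_0) grpalg) = 0"
  unfolding star_def by (rule map_key_zero[OF inj_uminus_g])

lemma star_single[simp]: "star (Poly_Mapping.single g c :: ('g::group_add,'k::field_char_0) grpalg) = Poly_Mapping.single (-g) c"
  unfolding star_def using map_key_single[OF inj_uminus_g, of "-g" c] by simp

lemma star_uminus: "star (- x :: ('g::group_add,'k::field_char_0) grpalg) = - star x"
  by (metis star_add star_zero add.right_inverse add_eq_0_iff)

lemma star_diff: "star (x - y :: ('g::group_add,'k::field_char_0) grpalg) = star x - star y"
  by (simp only: diff_conv_add_uminus star_add star_uminus)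

lemma star_one[simp]: "star (1 :: ('g::group_add,'k::field_char_0) grpalg) = 1"
  using star_single[of 0 1] by simp

lemma star_ss: "star (Poly_Mapping.single k d * Poly_Mapping.single g c :: ('g::group_add,'k::field_char_0) grpalg) = Poly_Mapping.single (-g) c * Poly_Mapping.single (-k) d"
proof -
  have "star (Poly_Mapping.single k d * Poly_Mapping.single g c :: ('g,'k) grpalg) = Poly_Mapping.single (- (k + g)) (d * c)"
    by (simp only: mult_single star_single)
  also have "\<dots> = Poly_Mapping.single (-g + -k) (c * d)" by (simp only: minus_add mult.commute[of d c])
  also have "\<dots> = Poly_Mapping.single (-g) c * Poly_Mapping.single (-k) d" by (simp only: mult_single)
  finally show ?thesis .
qed

lemma star_mult_single: "star (x * Poly_Mapping.single g c :: ('g::group_add,'k::field_char_0) grpalg) = Poly_Mapping.single (-g) c * star x"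
proof (induction x rule: pm_induct)
  case 1 then show ?case by simp
next
  case (2 p k d)
  have "star ((p + Poly_Mapping.single k d) * Poly_Mapping.single g c) = star (p * Poly_Mapping.single g c) + star (Poly_Mapping.single k d * Poly_Mapping.single g c)"
    by (simp only: distrib_right star_add)
  also have "\<dots> = Poly_Mapping.single (-g) c * star p + Poly_Mapping.single (-g) c * Poly_Mapping.single (-k) d"
    by (simp only: 2 star_ss)
  also have "\<dots> = Poly_Mapping.single (-g) c * star (p + Poly_Mapping.single k d)"
    by (simp only: distrib_left star_add star_single)
  finally show ?case .
qed

lemma star_mult: "star (x * y :: ('g::group_add,'k::field_char_0) grpalg) = star y * star x"
proof (induction y rule: pm_induct)
  case 1 then show ?case by simp
next
  case (2 p k d)
  have "star (x * (p + Poly_Mapping.single k d)) = star (x * p) + star (x * Poly_Mapping.single k d)"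
    by (simp only: distrib_left star_add)
  also have "\<dots> = star p * star x + Poly_Mapping.single (-k) d * star x"
    by (simp only: 2 star_mult_single)
  also have "\<dots> = star (p + Poly_Mapping.single k d) * star x"
    by (simp only: distrib_right star_add star_single)
  finally show ?case .
qed

lemma star_star[simp]: "star (star x :: ('g::group_add,'k::field_char_0) grpalg) = x"
proof -
  have "star (star x) = Poly_Mapping.map_key (uminus \<circ> uminus) x"
    unfolding star_def by (rule map_key_compose[OF inj_uminus_g inj_uminus_g])
  also have "uminus \<circ> uminus = (\<lambda>x::'g. x)" by auto
  finally show ?thesis by (simp add: map_key_id)
qed

definition hh :: "('g::group_add,'k::field_char_0) grpalg" where
  "hh = Poly_Mapping.single 0 (1/2)"

lemma half_hh: "half x = hh * (x :: ('g::group_add,'k::field_char_0) grpalg)"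
proof -
  have e: "(\<lambda>c::'k. c / 2) = (*) (1/2)" by (rule ext) simp
  show ?thesis unfolding half_def hh_def e by (rule mult_map_scale_conv_mult)
qed

lemma single0_comm: "Poly_Mapping.single 0 c * x = x * (Poly_Mapping.single 0 c :: ('g::group_add,'k::field_char_0) grpalg)"
proof (induction x rule: pm_induct)
  case 1 then show ?case by simp
next
  case (2 p k d)
  have e: "Poly_Mapping.single 0 c * Poly_Mapping.single k d = (Poly_Mapping.single k d * Poly_Mapping.single 0 c :: ('g,'k) grpalg)"
    by (simp only: mult_single add_0_left add_0_right mult.commute[of c d])
  show ?case by (simp only: distrib_left distrib_right 2 e)
qed

lemma hh_comm: "hh * x = x * hh"
  unfolding hh_def by (rule single0_comm)

lemma hh_hh: "hh + hh = (1 :: ('g::group_add,'k::field_char_0) grpalg)"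
  unfolding hh_def by (simp flip: single_add)

lemma star_hh[simp]: "star hh = hh"
  unfolding hh_def by simp

lemma IG_zero[simp]: "0 \<in> IG" unfolding IG_def by (rule ideal2.zero)
lemma IG_add: "x \<in> IG \<Longrightarrow> y \<in> IG \<Longrightarrow> x + y \<in> IG" unfolding IG_def by (rule ideal2.add)
lemma IG_mult: "x \<in> IG \<Longrightarrow> r * x * t \<in> IG" unfolding IG_def by (rule ideal2.mult)
lemma IG_lmult: "x \<in> IG \<Longrightarrow> r * x \<in> IG" using IG_mult[of x r 1] by simp
lemma IG_rmult: "x \<in> IG \<Longrightarrow> x * t \<in> IG" using IG_mult[of x 1 t] by simp
lemma IG_uminus: "x \<in> IG \<Longrightarrow> - x \<in> IG" using IG_lmult[of x "-1"] by simp
lemma IG_diff: "x \<in> IG \<Longrightarrow> y \<in> IG \<Longrightarrow> x - y \<in> IG" unfolding diff_conv_add_uminus by (intro IG_add IG_uminus)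
lemma IG_gen: "star s = s \<Longrightarrow> z * s - s * z \<in> IG" unfolding IG_def by (rule ideal2.gen) blast
lemma IG_gen': "star s = s \<Longrightarrow> s * z - z * s \<in> IG" using IG_uminus[OF IG_gen] by simp

lemma IG_star: "x \<in> IG \<Longrightarrow> star x \<in> IG"
  unfolding IG_def
proof (induction x rule: ideal2.induct)
  case zero then show ?case by (simp add: ideal2.zero)
next
  case (gen s)
  then obtain a b where ab: "s = a * b - b * a" "star b = b" by blast
  have "star s = - (star a * b - b * star a)" using ab by (simp add: star_diff star_mult)
  then show ?case using IG_uminus[OF IG_gen[OF ab(2), of "star a"]] unfolding IG_def by simp
next
  case (add x y) then show ?case by (simp add: star_add ideal2.add)
next
  case (mult x r t) then show ?case using ideal2.mult[of "star x" _ "star t" "star r"] by (simp add: star_mult mult.assoc)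
qed

lemma star_hh_mult: "star (hh * x) = hh * star x"
  by (simp add: star_mult hh_comm)

lemma hh_double: "hh * x + hh * x = x"
  by (simp only: distrib_right[symmetric] hh_hh mult_1_left)

lemma hh_split: "hh * (x + y) + hh * (x - y) = x"
proof -
  have "(x + y) + (x - y) = x + x" by (simp add: algebra_simps)
  then have "hh * (x + y) + hh * (x - y) = hh * x + hh * x" by (simp only: distrib_left[symmetric])
  then show ?thesis by (simp only: hh_double)
qed

lemma central: "star s - s \<in> IG \<Longrightarrow> z * s - s * z \<in> IG"
proof -
  assume a: "star s - s \<in> IG"
  define sb where "sb = hh * (s + star s)"
  define v where "v = hh * (s - star s)"
  have ssb: "star sb = sb" unfolding sb_def star_hh_mult by (simp add: star_add add.commute)
  have v: "v \<in> IG" unfolding v_def using IG_lmult[OF IG_uminus[OF a]] by simp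
  have s: "s = sb + v" unfolding sb_def v_def using hh_split[of s "star s"] by simp
  have "z * s - s * z = (z * sb - sb * z) + (z * v - v * z)"
    by (subst (1 2) s) (simp add: algebra_simps)
  then show ?thesis by (simp only:) (intro IG_add IG_gen[OF ssb] IG_diff IG_lmult[OF v] IG_rmult[OF v])
qed

lemma bar_hh: "bar x = hh * (x + star x)" unfolding bar_def half_hh ..
lemma vecp_hh: "vecp x = hh * (x - star x)" unfolding vecp_def half_hh ..
lemma star_bar: "star (bar x) = bar x" unfolding bar_hh star_hh_mult by (simp add: star_add add.commute)
lemma star_vecp: "star (vecp x) = - vecp x" unfolding vecp_hh star_hh_mult by (simp add: star_diff algebra_simps)
lemma bar_vecp: "x = bar x + vecp x" unfolding bar_hh vecp_hh using hh_split[of x "star x"] by simp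

lemma core:
  fixes A B y :: "('g::group_add,'k::field_char_0) grpalg"
  shows "bar (y * (A*B - B*A)) - (-(1+1)) * dotp (brk (vecp A) (vecp B)) (vecp y) \<in> IG"
proof -
  define Ab where "Ab = bar A"
  define Bb where "Bb = bar B"
  define al where "al = vecp A"
  define be where "be = vecp B"
  define W2 where "W2 = al * be - be * al"
  have A: "A = Ab + al" unfolding Ab_def al_def by (rule bar_vecp)
  have B: "B = Bb + be" unfolding Bb_def be_def by (rule bar_vecp)
  have sAb: "star Ab = Ab" and sBb: "star Bb = Bb" unfolding Ab_def Bb_def by (rule star_bar)+
  have sal: "star al = - al" and sbe: "star be = - be" unfolding al_def be_def by (rule star_vecp)+
  have Deq: "A*B - B*A - W2 = (Ab*Bb - Bb*Ab) - (be*Ab - Ab*be) + (al*Bb - Bb*al)"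
    unfolding W2_def by (subst (1 2) A, subst (1 2) B) (simp add: algebra_simps)
  have D: "A*B - B*A - W2 \<in> IG"
    unfolding Deq by (intro IG_add IG_diff IG_gen[OF sBb] IG_gen[OF sAb])
  have sW2: "star W2 = - W2" unfolding W2_def by (simp add: star_diff star_mult sal sbe)
  define E where "E = y * (A*B - B*A)"
  define yb where "yb = bar y"
  define et where "et = vecp y"
  have y: "y = yb + et" unfolding yb_def et_def by (rule bar_vecp)
  have syb: "star yb = yb" unfolding yb_def by (rule star_bar)
  have set: "star et = - et" unfolding et_def by (rule star_vecp)
  define F where "F = et * W2 + W2 * et"
  have e1: "E - y * W2 \<in> IG" unfolding E_def using IG_lmult[OF D, of y] by (simp add: algebra_simps)
  have e2: "star E - star (y * W2) \<in> IG" using IG_star[OF e1] by (simp add: star_diff)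
  have e3: "y * W2 + star (y * W2) - F = yb * W2 - W2 * yb"
    unfolding F_def star_mult sW2 by (subst (1 2) y) (simp add: star_add syb set algebra_simps)
  have "E + star E - F = (E - y * W2) + (star E - star (y * W2)) + (y * W2 + star (y * W2) - F)"
    by (simp add: algebra_simps)
  hence e4: "E + star E - F \<in> IG" using e1 e2 e3 IG_add IG_gen'[OF syb] by metis
  have e5: "bar E - hh * F \<in> IG" using IG_lmult[OF e4, of hh] unfolding bar_hh by (simp add: algebra_simps)
  have "dotp (brk al be) et = - (hh * (hh * W2 * et + et * (hh * W2)))"
    unfolding dotp_def brk_def half_hh W2_def ..
  also have "hh * W2 * et + et * (hh * W2) = hh * F"
  proof -
    have "et * (hh * W2) = hh * (et * W2)" by (metis mult.assoc hh_comm)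
    then show ?thesis unfolding F_def by (simp add: distrib_left mult.assoc add.commute)
  qed
  finally have "(-(1+1)) * dotp (brk al be) et = (hh + hh) * (hh * F)"
    by (simp add: algebra_simps mult_2)
  also have "\<dots> = hh * F" by (simp add: hh_hh)
  finally show ?thesis using e5 unfolding E_def al_def be_def et_def by simp
qed

lemma SymRep_mult: "r1 \<in> SymRep \<Longrightarrow> r2 \<in> SymRep \<Longrightarrow> r1 * r2 \<in> SymRep"
proof -
  assume a1: "r1 \<in> SymRep" and a2: "r2 \<in> SymRep"
  have i1: "star r1 - r1 \<in> IG" and i2: "star r2 - r2 \<in> IG" using a1 a2 unfolding SymRep_def by auto
  have "star (r1 * r2) - r1 * r2 = (star r2 - r2) * star r1 + r2 * (star r1 - r1) + (r2 * r1 - r1 * r2)"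
    by (simp add: star_mult algebra_simps)
  then show ?thesis unfolding SymRep_def mem_Collect_eq
    by (simp only:) (intro IG_add IG_rmult[OF i2] IG_lmult[OF i1] central[OF i1])
qed

lemma piG_eq: "x - y \<in> IG \<Longrightarrow> piG x = piG y"
  unfolding piG_def
proof (intro Collect_cong iffI)
  fix z assume "x - y \<in> IG"
  { assume "z - x \<in> IG" then show "z - y \<in> IG" using IG_add[OF _ \<open>x - y \<in> IG\<close>] by fastforce }
  { assume "z - y \<in> IG" then show "z - x \<in> IG" using IG_diff[OF _ \<open>x - y \<in> IG\<close>] by fastforce }
qed

lemma sharp_sub:
  assumes "\<forall>s\<in>S1. \<exists>r s'. r \<in> SymRep \<and> s' \<in> S2 \<and> s - r * s' \<in> IG"
  shows "sharp_ideal S1 \<subseteq> sharp_ideal S2"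
proof -
  from assms obtain f g where fg: "\<And>s. s \<in> S1 \<Longrightarrow> f s \<in> SymRep \<and> g s \<in> S2 \<and> s - f s * g s \<in> IG"
    by metis
  show ?thesis
  proof
    fix X assume "X \<in> sharp_ideal S1"
    then obtain rs where X: "X = piG (sum_list (map (\<lambda>(r, s). r * s) rs))"
      and rs: "\<forall>(r, s) \<in> set rs. r \<in> SymRep \<and> s \<in> S1"
      unfolding sharp_ideal_def by blast
    define rs' where "rs' = map (\<lambda>(r,s). (r * f s, g s)) rs"
    have m: "\<forall>(r, s) \<in> set rs'. r \<in> SymRep \<and> s \<in> S2"
      using rs fg SymRep_mult unfolding rs'_def by fastforce
    have "sum_list (map (\<lambda>(r, s). r * s) rs) - sum_list (map (\<lambda>(r, s). r * s) rs') \<in> IG"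
      using rs unfolding rs'_def
    proof (induction rs)
      case Nil then show ?case by simp
    next
      case (Cons p rs)
      obtain r s where p: "p = (r, s)" by force
      have "s \<in> S1" using Cons.prems p by auto
      then have "r * (s - f s * g s) \<in> IG" using fg IG_lmult by blast
      moreover have "sum_list (map (\<lambda>(r, s). r * s) rs) - sum_list (map (\<lambda>(r, s). r * s) (map (\<lambda>(r,s). (r * f s, g s)) rs)) \<in> IG"
        using Cons by auto
      ultimately show ?case using IG_add unfolding p by (fastforce simp: algebra_simps)
    qed
    then have "X = piG (sum_list (map (\<lambda>(r, s). r * s) rs'))" using X piG_eq by metis
    then show "X \<in> sharp_ideal S2" unfolding sharp_ideal_def using m by blast
  qed
qed

lemma hh_two: "hh * (2 * z) = z"
  by (simp only: mult.assoc[symmetric] mult_2_right hh_hh mult_1_left)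

lemma grp_mult: "grp g * grp h = (grp (g + h) :: ('g::group_add,'k::field_char_0) grpalg)"
  unfolding grp_def by (simp add: mult_single)

lemma grp_zero: "grp 0 = (1 :: ('g::group_add,'k::field_char_0) grpalg)"
  unfolding grp_def by simp

lemma bar_diff: "bar x - bar y = bar (x - y)"
  unfolding bar_hh by (simp add: star_diff algebra_simps)

lemma key:
  fixes a b :: "'g::group_add" and x :: "('g,'k::field_char_0) grpalg"
  shows "bar (x * grp (- a + - b + a + b)) - bar x
     - (-(1+1)) * dotp (brk (vecp (grp a)) (vecp (grp b))) (vecp (x * grp (-a) * grp (-b))) \<in> IG"
proof -
  define y where "y = x * grp (-a) * grp (-b)"
  have 1: "y * grp a * grp b = x * grp (- a + - b + a + b)"
    unfolding y_def by (simp add: mult.assoc grp_mult add.assoc)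
  have 2: "y * grp b * grp a = x"
    unfolding y_def by (simp add: mult.assoc grp_mult add.assoc grp_zero)
  have "y * (grp a * grp b - grp b * grp a) = y * grp a * grp b - y * grp b * grp a"
    by (simp add: right_diff_distrib mult.assoc)
  then have "bar (x * grp (- a + - b + a + b)) - bar x = bar (y * (grp a * grp b - grp b * grp a))"
    unfolding bar_diff 1 2 by simp
  then show ?thesis using core[of y "grp a" "grp b"] unfolding y_def by simp
qed

lemma star_m2: "star (-(1+1) :: ('g::group_add,'k::field_char_0) grpalg) = -(1+1)"
  by (simp only: star_uminus star_add star_one)

theorem mainTheorem12:
  fixes a b :: "'g::group_add"
  shows "(Lsharp {- a + - b + a + b} :: ('g, 'k::field_char_0) grpalg set set)
         = sharp_ideal {dotp (brk (vecp (grp a)) (vecp (grp b))) c | c. c \<in> AntiRep}"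
proof -
  define w :: "('g, 'k) grpalg" where "w = brk (vecp (grp a)) (vecp (grp b))"
  define l where "l = - a + - b + a + b"
  have m2: "(-(1+1) :: ('g, 'k) grpalg) \<in> SymRep" unfolding SymRep_def mem_Collect_eq star_m2 diff_self by (rule IG_zero)
  have mh: "(- hh :: ('g, 'k) grpalg) \<in> SymRep" unfolding SymRep_def by (simp add: star_uminus)
  have s1: "Lsharp {l} \<subseteq> sharp_ideal {dotp w c | c. c \<in> AntiRep}"
    unfolding Lsharp_def
  proof (rule sharp_sub, intro ballI)
    fix s :: "('g, 'k) grpalg" assume "s \<in> {bar (x * grp l') - bar x | x l'. l' \<in> {l}}"
    then obtain x where s: "s = bar (x * grp l) - bar x" by blast
    define c where "c = vecp (x * grp (-a) * grp (-b))"
    have "c \<in> AntiRep" unfolding AntiRep_def c_def by (simp add: star_vecp)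
    moreover have "s - (-(1+1)) * dotp w c \<in> IG" using key[of x a b] unfolding s c_def w_def l_def .
    ultimately show "\<exists>r s'. r \<in> SymRep \<and> s' \<in> {dotp w c | c. c \<in> AntiRep} \<and> s - r * s' \<in> IG"
      using m2 by blast
  qed
  have s2: "sharp_ideal {dotp w c | c. c \<in> AntiRep} \<subseteq> Lsharp {l}"
    unfolding Lsharp_def
  proof (rule sharp_sub, intro ballI)
    fix s :: "('g, 'k) grpalg" assume "s \<in> {dotp w c | c. c \<in> AntiRep}"
    then obtain c where s: "s = dotp w c" and c: "c \<in> AntiRep" by blast
    define x where "x = c * grp b * grp a"
    define s' where "s' = bar (x * grp l) - bar x"
    have xc: "x * grp (-a) * grp (-b) = c"
      unfolding x_def by (simp add: mult.assoc grp_mult add.assoc grp_zero)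
    have K: "s' - (-(1+1)) * dotp w (vecp c) \<in> IG"
      using key[of x a b] unfolding s'_def xc w_def l_def .
    have cv: "c - vecp c \<in> IG"
    proof -
      have "c - vecp c = hh * (star c + c)" unfolding vecp_hh by (simp add: algebra_simps hh_double)
      then show ?thesis using c IG_lmult unfolding AntiRep_def by auto
    qed
    have dd: "dotp w c - dotp w (vecp c) = - (hh * (w * (c - vecp c) + (c - vecp c) * w))"
      unfolding dotp_def half_hh by (simp add: algebra_simps)
    have dI: "dotp w c - dotp w (vecp c) \<in> IG"
      unfolding dd using IG_uminus IG_lmult IG_add IG_lmult[OF cv] IG_rmult[OF cv] by metis
    have "s - (- hh) * s' = (dotp w c - dotp w (vecp c)) + hh * (s' - (-(1+1)) * dotp w (vecp c))"
      unfolding s by (simp add: algebra_simps hh_double hh_two)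
    then have "s - (- hh) * s' \<in> IG" using IG_add[OF dI IG_lmult[OF K]] by simp
    moreover have "s' \<in> {bar (x * grp l') - bar x | x l'. l' \<in> {l}}" unfolding s'_def by blast
    ultimately show "\<exists>r s'. r \<in> SymRep \<and> s' \<in> {bar (x * grp l') - bar x | x l'. l' \<in> {l}} \<and> s - r * s' \<in> IG"
      using mh by blast
  qed
  show ?thesis using s1 s2 unfolding w_def l_def by blast
qed

end
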